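(* In the setting of the imitative spectrum access dynamics, suppose the information sharing graph (equivalently, the cluster-based graph) is connected, and let $\boldsymbol{X}^*$ be an imitation equilibrium satisfying $U(m,\boldsymbol{X}^* )=U(i,\boldsymbol{X}^* )$ for all $m,i\in\Delta_k(\boldsymbol{X}^* )$ and all clusters $k$. Then all users achieve the same expected throughput: $U(a^*_n,\boldsymbol{X}^* )=U(a^*_{n'},\boldsymbol{X}^* )$ for all users $n,n'\in\mathcal{N}$, where $a^*_n$ is the channel chosen by user $n$ at $\boldsymbol{X}^*$. Equivalently, $U(m,\boldsymbol{X}^* )=U(i,\boldsymbol{X}^* )$ for all channels $m,i$ used by some user at $\boldsymbol{X}^*$.
   Context: There are $K$ clusters with sizes $z_k>0$ forming an undirected cluster-based graph; $\mathcal{C}_k$ is the set consisting of cluster $k$ and its neighboring clusters. A population state $\boldsymbol{X}=(\boldsymbol{X}^1,\dots,\boldsymbol{X}^K)$ has $X^k_m\ge0$, $\sum_mX^k_m=1$. $U(m,\boldsymbol{X})=\theta_mB_m\,g\big(\sum_kz_kX^k_m\big)$ is the expected throughput of a user on channel $m$, where $\theta_m\in(0,1)$, $B_m>0$ and $g(x)=\sum_{\lambda=1}^{\lambda_{\max}}\frac{1}{\lambda_{\max}}\left(\frac{\lambda_{\max}-\lambda}{\lambda_{\max}}\right)^{x-1}$. $\Delta_k(\boldsymbol{X}^* )=\{m: X^{h*}_m>0\text{ for some }h\in\mathcal{C}_k\}$. *)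

theory Defs
  imports Complex_Main
begin

text \<open>Clusters are indexed by 0..<K, channels by 0..<M. A population state is
  X :: nat => nat => real, X k m = fraction of cluster k on channel m.\<close>

definition g :: "nat \<Rightarrow> real \<Rightarrow> real" where
  "g lmax x = (\<Sum>l = 1..lmax. (1 / real lmax) *
       ((real lmax - real l) / real lmax) powr (x - 1))"

definition U :: "(nat \<Rightarrow> real) \<Rightarrow> (nat \<Rightarrow> real) \<Rightarrow> nat \<Rightarrow> (nat \<Rightarrow> real)
                  \<Rightarrow> nat \<Rightarrow> (nat \<Rightarrow> nat \<Rightarrow> real) \<Rightarrow> nat \<Rightarrow> real" where
  "U \<theta> B lmax z K X m = \<theta> m * B m * g lmax (\<Sum>k<K. z k * X k m)"

definition is_state :: "nat \<Rightarrow> nat \<Rightarrow> (nat \<Rightarrow> nat \<Rightarrow> real) \<Rightarrow> bool" where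
  "is_state K M X \<longleftrightarrow> (\<forall>k<K. (\<forall>m<M. X k m \<ge> 0) \<and> (\<Sum>m<M. X k m) = 1)"

definition nbhd :: "nat \<Rightarrow> (nat \<Rightarrow> nat \<Rightarrow> bool) \<Rightarrow> nat \<Rightarrow> nat set" where
  "nbhd K E k = {k} \<union> {h. h < K \<and> E k h}"

definition Delta :: "nat \<Rightarrow> nat \<Rightarrow> (nat \<Rightarrow> nat \<Rightarrow> bool) \<Rightarrow> (nat \<Rightarrow> nat \<Rightarrow> real) \<Rightarrow> nat \<Rightarrow> nat set" where
  "Delta K M E X k = {m. m < M \<and> (\<exists>h\<in>nbhd K E k. X h m > 0)}"

definition connected_graph :: "nat \<Rightarrow> (nat \<Rightarrow> nat \<Rightarrow> bool) \<Rightarrow> bool" where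
  "connected_graph K E \<longleftrightarrow>
     (\<forall>k h. k < K \<longrightarrow> h < K \<longrightarrow> (\<lambda>a b. a < K \<and> b < K \<and> E a b)\<^sup>*\<^sup>* k h)"

end

theory Submission
  imports Defs
begin

theorem corollary1:
  fixes K M lmax :: nat and E :: "nat \<Rightarrow> nat \<Rightarrow> bool"
    and z \<theta> B :: "nat \<Rightarrow> real" and X :: "nat \<Rightarrow> nat \<Rightarrow> real"
  assumes sym: "\<And>a b. E a b \<Longrightarrow> E b a"
    and irrefl: "\<And>a. \<not> E a a"
    and conn: "connected_graph K E"
    and zpos: "\<And>k. k < K \<Longrightarrow> z k > 0"
    and theta: "\<And>m. m < M \<Longrightarrow> 0 < \<theta> m \<and> \<theta> m < 1"
    and Bpos: "\<And>m. m < M \<Longrightarrow> B m > 0"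
    and lmax: "lmax \<ge> 1"
    and state: "is_state K M X"
    and eq: "\<And>k m i. k < K \<Longrightarrow> m \<in> Delta K M E X k \<Longrightarrow> i \<in> Delta K M E X k \<Longrightarrow>
               U \<theta> B lmax z K X m = U \<theta> B lmax z K X i"
  shows "\<forall>m<M. \<forall>i<M. (\<exists>h<K. X h m > 0) \<longrightarrow> (\<exists>h<K. X h i > 0) \<longrightarrow>
           U \<theta> B lmax z K X m = U \<theta> B lmax z K X i"
proof -
  let ?U = "U \<theta> B lmax z K X"
  have ex: "\<exists>c<M. X k c > 0" if "k < K" for k
  proof (rule ccontr)
    assume "\<not> ?thesis"
    hence "\<forall>c<M. X k c \<le> 0" by auto
    hence "(\<Sum>c<M. X k c) \<le> 0" by (intro sum_nonpos) auto
    with state that show False unfolding is_state_def by auto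
  qed
  define c where "c k = (SOME m. m < M \<and> X k m > 0)" for k
  have c: "c k < M \<and> X k (c k) > 0" if "k < K" for k
    using someI_ex[OF ex[OF that]] unfolding c_def by auto
  have inD: "m \<in> Delta K M E X k" if "m < M" "X k m > 0" for m k
    using that unfolding Delta_def nbhd_def by auto
  have cD: "c k \<in> Delta K M E X k" if "k < K" for k
    using c[OF that] inD by auto
  have edge: "?U (c a) = ?U (c b)" if "a < K" "b < K" "E a b" for a b
  proof -
    have "c a \<in> Delta K M E X b"
      using c[OF that(1)] sym[OF that(3)] that unfolding Delta_def nbhd_def by auto
    thus ?thesis using eq[OF that(2) _ cD[OF that(2)]] by auto
  qed
  have reach: "(\<lambda>a b. a < K \<and> b < K \<and> E a b)\<^sup>*\<^sup>* h k \<Longrightarrow> h < K \<Longrightarrow> ?U (c k) = ?U (c h)" for h k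
  proof (induction rule: rtranclp_induct)
    case base then show ?case by simp
  next
    case (step y z) then show ?case using edge by metis
  qed
  show ?thesis
  proof (intro allI impI)
    fix m i assume "m < M" "i < M" and hm: "\<exists>h<K. X h m > 0" and hi: "\<exists>h<K. X h i > 0"
    then obtain h h' where h: "h < K" "X h m > 0" and h': "h' < K" "X h' i > 0" by auto
    have 1: "?U m = ?U (c h)" using eq[OF h(1) inD[OF \<open>m < M\<close> h(2)] cD[OF h(1)]] .
    have 2: "?U i = ?U (c h')" using eq[OF h'(1) inD[OF \<open>i < M\<close> h'(2)] cD[OF h'(1)]] .
    have 3: "?U (c h') = ?U (c h)"
      using reach[OF _ h(1)] conn h h' unfolding connected_graph_def by blast
    show "?U m = ?U i" using 1 2 3 by simp
  qed
qed

end
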